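(* Let $f_1,\dots,f_n:\mathbb{R}^d\to\mathbb{R}$ be such that each $f_i$ is $L_i$-smooth and $\mu_i$-strongly convex with minimizer $x_i$. Let $\alpha\in(0,1)$ and $\tilde f(x) = \frac{1}{n}\sum_{i=1}^n f_i(\alpha x + (1-\alpha)x_i)$, with minimizer $x^*$. Let $\overline{\mu} = \frac{1}{n}\sum_i\mu_i$. Then for any $x^0\in\mathbb{R}^d$, \[ \|x^0 - x^*\|^2 \leq \frac{1}{\overline{\mu}}\cdot\frac{1}{n}\sum_{i=1}^n L_i\|x^0 - x_i\|^2. \]
   Context: A differentiable $g$ is $L$-smooth if $\|\nabla g(x)-\nabla g(y)\|\leq L\|x-y\|$ for all $x,y$, and $\mu$-strongly convex if $g(x)\geq g(y)+\langle\nabla g(y),x-y\rangle+\frac{\mu}{2}\|x-y\|^2$ for all $x,y$. *)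

theory Defs
  imports "HOL-Analysis.Analysis"
begin

definition L_smooth :: "real \<Rightarrow> ('a::real_inner \<Rightarrow> real) \<Rightarrow> bool" where
  "L_smooth L g \<longleftrightarrow> (\<exists>G. (\<forall>x. GDERIV g x :> G x) \<and>
      (\<forall>x y. norm (G x - G y) \<le> L * norm (x - y)))"

definition strongly_convex :: "real \<Rightarrow> ('a::real_inner \<Rightarrow> real) \<Rightarrow> bool" where
  "strongly_convex \<mu> g \<longleftrightarrow> (\<exists>G. (\<forall>x. GDERIV g x :> G x) \<and>
      (\<forall>x y. g x \<ge> g y + inner (G y) (x - y) + \<mu> / 2 * (norm (x - y))\<^sup>2))"

end

theory Submission
  imports Defs
begin

lemma grad_zero_at_min:
  fixes g :: "'a::real_inner \<Rightarrow> real"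
  assumes "\<And>x. GDERIV g x :> G x" and "\<And>y. g m \<le> g y"
  shows "G m = 0"
proof -
  have d: "(g has_derivative (\<lambda>h. inner h (G m))) (at m)"
    using assms(1)[of m] by (simp add: gderiv_def)
  have "(\<lambda>h. inner h (G m)) = (\<lambda>v. 0)"
    by (rule differential_zero_maxmin[OF _ open_UNIV d]) (use assms(2) in auto)
  then have "inner (G m) (G m) = 0" by metis
  then show ?thesis by simp
qed

lemma descent:
  fixes g :: "'a::real_inner \<Rightarrow> real"
  assumes gd: "\<And>x. GDERIV g x :> G x"
    and lip: "\<And>x y. norm (G x - G y) \<le> L * norm (x - y)"
    and z: "G m = 0"
  shows "g (m + h) \<le> g m + L / 2 * (norm h)\<^sup>2"
proof -
  define \<phi> where "\<phi> t = g (m + t *\<^sub>R h) - L / 2 * t\<^sup>2 * (norm h)\<^sup>2" for t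
  have der: "(\<phi> has_real_derivative (inner h (G (m + t *\<^sub>R h)) - L * t * (norm h)\<^sup>2)) (at t)" for t
  proof -
    have a: "((\<lambda>t. m + t *\<^sub>R h) has_derivative (\<lambda>s. s *\<^sub>R h)) (at t)"
      by (auto intro!: derivative_eq_intros)
    have b: "(g has_derivative (\<lambda>k. inner k (G (m + t *\<^sub>R h)))) (at (m + t *\<^sub>R h))"
      using gd by (simp add: gderiv_def)
    have c: "((\<lambda>t. g (m + t *\<^sub>R h)) has_derivative (\<lambda>s. inner (s *\<^sub>R h) (G (m + t *\<^sub>R h)))) (at t)"
      using has_derivative_compose[OF a b] by simp
    have c': "((\<lambda>t. g (m + t *\<^sub>R h)) has_real_derivative inner h (G (m + t *\<^sub>R h))) (at t)"
    proof -
      have "(\<lambda>s. inner (s *\<^sub>R h) (G (m + t *\<^sub>R h))) = (*) (inner h (G (m + t *\<^sub>R h)))"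
        by (auto simp: fun_eq_iff)
      then show ?thesis unfolding has_field_derivative_def using c by simp
    qed
    have e: "((\<lambda>t. L / 2 * t\<^sup>2 * (norm h)\<^sup>2) has_real_derivative L * t * (norm h)\<^sup>2) (at t)"
      by (auto intro!: derivative_eq_intros)
    show ?thesis unfolding \<phi>_def[abs_def] using DERIV_diff[OF c' e] by simp
  qed
  have "\<phi> 0 \<ge> \<phi> 1"
  proof (rule DERIV_nonpos_imp_decreasing_open[where f=\<phi> and a=0 and b=1])
    show "(0::real) \<le> 1" by simp
    show "continuous_on {0..1} \<phi>"
      using der by (meson DERIV_isCont continuous_at_imp_continuous_on)
    fix t :: real assume t: "0 < t" "t < 1"
    have "inner h (G (m + t *\<^sub>R h)) = inner h (G (m + t *\<^sub>R h) - G m)" using z by simp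
    also have "\<dots> \<le> norm h * norm (G (m + t *\<^sub>R h) - G m)" by (rule norm_cauchy_schwarz)
    also have "\<dots> \<le> norm h * (L * norm (t *\<^sub>R h))"
      using lip[of "m + t *\<^sub>R h" m] by (intro mult_left_mono) auto
    also have "\<dots> = L * t * (norm h)\<^sup>2" using t by (simp add: power2_eq_square)
    finally show "\<exists>y. (\<phi> has_real_derivative y) (at t) \<and> y \<le> 0"
      using der[of t] by (intro exI[of _ "inner h (G (m + t *\<^sub>R h)) - L * t * (norm h)\<^sup>2"]) auto
  qed
  then show ?thesis unfolding \<phi>_def by simp
qed

theorem proposition5:
  fixes f :: "nat \<Rightarrow> 'a::euclidean_space \<Rightarrow> real"
    and L \<mu> :: "nat \<Rightarrow> real" and xm :: "nat \<Rightarrow> 'a"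
    and n :: nat and \<alpha> :: real and xstar x0 :: 'a
  assumes "n \<ge> 1"
    and "\<And>i. i \<in> {1..n} \<Longrightarrow> L_smooth (L i) (f i)"
    and "\<And>i. i \<in> {1..n} \<Longrightarrow> \<mu> i > 0"
    and "\<And>i. i \<in> {1..n} \<Longrightarrow> strongly_convex (\<mu> i) (f i)"
    and "\<And>i y. i \<in> {1..n} \<Longrightarrow> f i (xm i) \<le> f i y"
    and "0 < \<alpha>" and "\<alpha> < 1"
    and "\<And>y. (1 / real n) * (\<Sum>i=1..n. f i (\<alpha> *\<^sub>R xstar + (1 - \<alpha>) *\<^sub>R xm i))
              \<le> (1 / real n) * (\<Sum>i=1..n. f i (\<alpha> *\<^sub>R y + (1 - \<alpha>) *\<^sub>R xm i))"
  shows "(norm (x0 - xstar))\<^sup>2 \<le>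
    (1 / ((1 / real n) * (\<Sum>i=1..n. \<mu> i))) *
    ((1 / real n) * (\<Sum>i=1..n. L i * (norm (x0 - xm i))\<^sup>2))"
proof -
  note A = assms
  define H where "H y = (\<Sum>i=1..n. f i (\<alpha> *\<^sub>R y + (1 - \<alpha>) *\<^sub>R xm i))" for y
  define yy where "yy i = \<alpha> *\<^sub>R xstar + (1 - \<alpha>) *\<^sub>R xm i" for i
  define zz where "zz i = \<alpha> *\<^sub>R x0 + (1 - \<alpha>) *\<^sub>R xm i" for i
  define D where "D = x0 - xstar"
  have npos: "real n > 0" using A(1) by simp
  have Hmin: "H xstar \<le> H y" for y
    using A(8)[of y] npos unfolding H_def by (simp add: divide_le_cancel)
  have "\<forall>i\<in>{1..n}. \<exists>G. (\<forall>x. GDERIV (f i) x :> G x) \<and>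
      (\<forall>x y. f i x \<ge> f i y + inner (G y) (x - y) + \<mu> i / 2 * (norm (x - y))\<^sup>2)"
    using A(4) unfolding strongly_convex_def by blast
  then obtain Gs where Gs: "\<And>i. i \<in> {1..n} \<Longrightarrow> (\<forall>x. GDERIV (f i) x :> Gs i x) \<and>
      (\<forall>x y. f i x \<ge> f i y + inner (Gs i y) (x - y) + \<mu> i / 2 * (norm (x - y))\<^sup>2)"
    by metis
  have "\<forall>i\<in>{1..n}. \<exists>G. (\<forall>x. GDERIV (f i) x :> G x) \<and>
      (\<forall>x y. norm (G x - G y) \<le> L i * norm (x - y))"
    using A(2) unfolding L_smooth_def by blast
  then obtain Gl where Gl: "\<And>i. i \<in> {1..n} \<Longrightarrow> (\<forall>x. GDERIV (f i) x :> Gl i x) \<and>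
      (\<forall>x y. norm (Gl i x - Gl i y) \<le> L i * norm (x - y))"
    by metis
  have Hder: "(H has_derivative (\<lambda>h. \<Sum>i=1..n. inner (\<alpha> *\<^sub>R h) (Gs i (yy i)))) (at xstar)"
    unfolding H_def
  proof (rule has_derivative_sum)
    fix i assume i: "i \<in> {1..n}"
    have a: "((\<lambda>y. \<alpha> *\<^sub>R y + (1 - \<alpha>) *\<^sub>R xm i) has_derivative (\<lambda>h. \<alpha> *\<^sub>R h)) (at xstar)"
      by (auto intro!: derivative_eq_intros)
    have b: "(f i has_derivative (\<lambda>k. inner k (Gs i (yy i)))) (at (\<alpha> *\<^sub>R xstar + (1 - \<alpha>) *\<^sub>R xm i))"
      using Gs[OF i] by (simp add: gderiv_def yy_def)
    show "((\<lambda>y. f i (\<alpha> *\<^sub>R y + (1 - \<alpha>) *\<^sub>R xm i)) has_derivative (\<lambda>h. inner (\<alpha> *\<^sub>R h) (Gs i (yy i)))) (at xstar)"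
      using has_derivative_compose[OF a b] by simp
  qed
  have "(\<lambda>h. \<Sum>i=1..n. inner (\<alpha> *\<^sub>R h) (Gs i (yy i))) = (\<lambda>v. 0)"
    by (rule differential_zero_maxmin[OF _ open_UNIV Hder]) (use Hmin in auto)
  then have gz: "(\<Sum>i=1..n. inner (Gs i (yy i)) (\<alpha> *\<^sub>R D)) = 0"
    by (metis (no_types, lifting) inner_commute sum.cong)
  have sc: "f i (zz i) \<ge> f i (yy i) + inner (Gs i (yy i)) (\<alpha> *\<^sub>R D) + \<alpha>\<^sup>2 / 2 * (\<mu> i * (norm D)\<^sup>2)"
    if i: "i \<in> {1..n}" for i
  proof -
    have e: "zz i - yy i = \<alpha> *\<^sub>R D" unfolding zz_def yy_def D_def by (simp add: algebra_simps)
    have "(norm (\<alpha> *\<^sub>R D))\<^sup>2 = \<alpha>\<^sup>2 * (norm D)\<^sup>2" using A(6) by (simp add: power_mult_distrib)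
    then show ?thesis using Gs[OF i] e by (metis (no_types, lifting) mult.assoc mult.commute times_divide_eq_left)
  qed
  have lo: "H x0 \<ge> H xstar + \<alpha>\<^sup>2 / 2 * ((\<Sum>i=1..n. \<mu> i) * (norm D)\<^sup>2)"
  proof -
    have "H x0 = (\<Sum>i=1..n. f i (zz i))" unfolding H_def zz_def by simp
    also have "\<dots> \<ge> (\<Sum>i=1..n. f i (yy i) + inner (Gs i (yy i)) (\<alpha> *\<^sub>R D) + \<alpha>\<^sup>2 / 2 * (\<mu> i * (norm D)\<^sup>2))"
      by (rule sum_mono) (use sc in auto)
    finally have "H x0 \<ge> (\<Sum>i=1..n. f i (yy i)) + (\<Sum>i=1..n. inner (Gs i (yy i)) (\<alpha> *\<^sub>R D))
        + \<alpha>\<^sup>2 / 2 * ((\<Sum>i=1..n. \<mu> i) * (norm D)\<^sup>2)"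
      by (simp add: sum.distrib sum_distrib_left sum_distrib_right)
    then show ?thesis using gz unfolding H_def yy_def by simp
  qed
  have ds: "f i (zz i) \<le> f i (yy i) + \<alpha>\<^sup>2 / 2 * (L i * (norm (x0 - xm i))\<^sup>2)"
    if i: "i \<in> {1..n}" for i
  proof -
    have g0: "Gl i (xm i) = 0"
      by (rule grad_zero_at_min[of "f i"]) (use Gl[OF i] A(5)[OF i] in auto)
    have "f i (xm i + \<alpha> *\<^sub>R (x0 - xm i)) \<le> f i (xm i) + L i / 2 * (norm (\<alpha> *\<^sub>R (x0 - xm i)))\<^sup>2"
      by (rule descent[of "f i" "Gl i"]) (use Gl[OF i] g0 in auto)
    moreover have "xm i + \<alpha> *\<^sub>R (x0 - xm i) = zz i" unfolding zz_def by (simp add: algebra_simps)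
    moreover have "(norm (\<alpha> *\<^sub>R (x0 - xm i)))\<^sup>2 = \<alpha>\<^sup>2 * (norm (x0 - xm i))\<^sup>2"
      using A(6) by (simp add: power_mult_distrib)
    moreover have "f i (xm i) \<le> f i (yy i)" using A(5)[OF i] .
    ultimately show ?thesis by (simp add: algebra_simps)
  qed
  have up: "H x0 \<le> H xstar + \<alpha>\<^sup>2 / 2 * (\<Sum>i=1..n. L i * (norm (x0 - xm i))\<^sup>2)"
  proof -
    have "H x0 = (\<Sum>i=1..n. f i (zz i))" unfolding H_def zz_def by simp
    also have "\<dots> \<le> (\<Sum>i=1..n. f i (yy i) + \<alpha>\<^sup>2 / 2 * (L i * (norm (x0 - xm i))\<^sup>2))"
      by (rule sum_mono) (use ds in auto)
    finally show ?thesis unfolding H_def yy_def by (simp add: sum.distrib sum_distrib_left)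
  qed
  define S where "S = (\<Sum>i=1..n. L i * (norm (x0 - xm i))\<^sup>2)"
  define M where "M = (\<Sum>i=1..n. \<mu> i)"
  have Mpos: "M > 0" unfolding M_def
    by (rule sum_pos) (use A(1) A(3) in auto)
  have "\<alpha>\<^sup>2 / 2 * (M * (norm D)\<^sup>2) \<le> \<alpha>\<^sup>2 / 2 * S" using lo up unfolding M_def S_def by linarith
  then have "M * (norm D)\<^sup>2 \<le> S" using A(6) by (simp add: mult_le_cancel_left_pos)
  then have "(norm D)\<^sup>2 \<le> S / M" using Mpos by (simp add: field_simps)
  moreover have "(1 / ((1 / real n) * M)) * ((1 / real n) * S) = S / M" using npos by (simp add: field_simps)
  ultimately show ?thesis unfolding D_def M_def S_def by simp
qed

end
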